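(* Let $f:A\to B$ be a homomorphism of abelian groups and let $\kappa$ be an infinite regular cardinal greater than the minimal number of generators of $A$. If $D$ is $L_f$-local, then $D^{\kappa}_{<\kappa}$ is $L_f$-local.
   Context: All groups are abelian. A homomorphism $f:X\to Y$ is orthogonal to a group $B$ if composition with $f$ induces a bijection $\mathop{\rm Hom}(Y,B)\to\mathop{\rm Hom}(X,B)$. For a homomorphism $f$, the $f$-localization $L_f$ is the localization functor whose local groups are exactly the groups $D$ to which $f$ is orthogonal ($L_f$-local means $f$ is orthogonal to $D$). For cardinals $\kappa\geq\lambda$ with $\lambda$ infinite, $D^\kappa_{<\lambda}$ denotes the subgroup of $\prod_\kappa D$ consisting of those elements whose support has cardinality less than $\lambda$. *)

theory Defs
  imports "HOL-Algebra.Algebra"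
begin

text \<open>Abelian groups are HOL-Algebra commutative groups (written multiplicatively).
  Homomorphisms G0 to D are taken up to equality on the carrier.\<close>

text \<open>f : G0 to H0 is orthogonal to D: precomposition with f, Hom(H0,D) to Hom(G0,D),
  is a bijection (homomorphisms identified when they agree on the carrier).\<close>
definition orthogonal ::
  "('a, 'm1) monoid_scheme \<Rightarrow> ('b, 'm2) monoid_scheme \<Rightarrow> ('a \<Rightarrow> 'b)
     \<Rightarrow> ('d, 'm3) monoid_scheme \<Rightarrow> bool" where
  "orthogonal G0 H0 f D \<longleftrightarrow>
     (\<forall>g \<in> hom G0 D. \<exists>h \<in> hom H0 D. \<forall>x \<in> carrier G0. h (f x) = g x) \<and>
     (\<forall>h1 \<in> hom H0 D. \<forall>h2 \<in> hom H0 D.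
        (\<forall>x \<in> carrier G0. h1 (f x) = h2 (f x)) \<longrightarrow> (\<forall>y \<in> carrier H0. h1 y = h2 y))"

definition Lf_local ::
  "('a, 'm1) monoid_scheme \<Rightarrow> ('b, 'm2) monoid_scheme \<Rightarrow> ('a \<Rightarrow> 'b)
     \<Rightarrow> ('d, 'm3) monoid_scheme \<Rightarrow> bool" where
  "Lf_local G0 H0 f D \<longleftrightarrow> orthogonal G0 H0 f D"

text \<open>D^\<kappa>_{<\<lambda>}: the subgroup of the product of copies of D indexed by I (with |I| = \<kappa>)
  of elements whose support has cardinality < \<lambda> (\<lambda> given as a cardinal relation).\<close>
definition small_support_power ::
  "('d, 'm) monoid_scheme \<Rightarrow> 'i set \<Rightarrow> 'c rel \<Rightarrow> ('i \<Rightarrow> 'd) monoid" where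
  "small_support_power D I lam =
     \<lparr> carrier = {x. x \<in> I \<rightarrow>\<^sub>E carrier D \<and> card_of {i \<in> I. x i \<noteq> \<one>\<^bsub>D\<^esub>} <o lam},
       monoid.mult = (\<lambda>x y. \<lambda>i \<in> I. x i \<otimes>\<^bsub>D\<^esub> y i),
       one = (\<lambda>i \<in> I. \<one>\<^bsub>D\<^esub>) \<rparr>"

end

theory Submission
  imports Defs
begin

lemma ssp_carrier:
  "x \<in> carrier (small_support_power D I lam) \<longleftrightarrow>
     x \<in> I \<rightarrow>\<^sub>E carrier D \<and> card_of {i \<in> I. x i \<noteq> \<one>\<^bsub>D\<^esub>} <o lam"
  by (simp add: small_support_power_def)

lemma ssp_mult:
  "x \<otimes>\<^bsub>small_support_power D I lam\<^esub> y = (\<lambda>i \<in> I. x i \<otimes>\<^bsub>D\<^esub> y i)"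
  by (simp add: small_support_power_def)

lemma ssp_proj:
  assumes "h \<in> hom H (small_support_power D I lam)" "i \<in> I"
  shows "(\<lambda>b. h b i) \<in> hom H D"
proof -
  have 1: "\<And>b. b \<in> carrier H \<Longrightarrow> h b i \<in> carrier D"
    using assms by (auto simp: hom_def ssp_carrier Pi_def PiE_def)
  have 2: "\<And>x y. x \<in> carrier H \<Longrightarrow> y \<in> carrier H \<Longrightarrow> h (x \<otimes>\<^bsub>H\<^esub> y) i = h x i \<otimes>\<^bsub>D\<^esub> h y i"
    using assms by (auto simp: hom_def ssp_mult)
  show ?thesis using 1 2 by (auto simp: hom_def)
qed

theorem lemma3:
  fixes A :: "('a, 'm1) monoid_scheme" and B :: "('b, 'm2) monoid_scheme"
    and D :: "('d, 'm3) monoid_scheme" and f :: "'a \<Rightarrow> 'b" and I :: "'i set"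
  assumes "comm_group A" and "comm_group B" and "comm_group D"
    and "f \<in> hom A B"
    and "infinite I" and "regularCard (card_of I)"
    and "\<exists>S \<subseteq> carrier A. generate A S = carrier A \<and> card_of S <o card_of I"
    and "Lf_local A B f D"
  shows "Lf_local A B f (small_support_power D I (card_of I))"
proof -
  let ?P = "small_support_power D I (card_of I)"
  have gA: "group A" and gB: "group B" and gD: "group D"
    using assms(1-3) comm_group_def by blast+
  have orth: "orthogonal A B f D" using assms(8) Lf_local_def by blast
  obtain S where S: "S \<subseteq> carrier A" "generate A S = carrier A" "card_of S <o card_of I"
    using assms(7) by blast
  have Cinf: "Cinfinite (card_of I)"
    using assms(5) by (simp add: cinfinite_def card_of_Card_order)
  have one_hom: "(\<lambda>b. \<one>\<^bsub>D\<^esub>) \<in> hom B D"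
    using gD by (auto simp: hom_def group.is_monoid)
  have ex: "\<exists>h \<in> hom B ?P. \<forall>x \<in> carrier A. h (f x) = g x" if g: "g \<in> hom A ?P" for g
  proof -
    have gi: "(\<lambda>a. g a i) \<in> hom A D" if "i \<in> I" for i using ssp_proj[OF g that] .
    define hh where "hh i = (if (\<forall>a\<in>carrier A. g a i = \<one>\<^bsub>D\<^esub>) then (\<lambda>b. \<one>\<^bsub>D\<^esub>)
       else (SOME h. h \<in> hom B D \<and> (\<forall>x\<in>carrier A. h (f x) = g x i)))" for i
    have hh: "hh i \<in> hom B D \<and> (\<forall>x\<in>carrier A. hh i (f x) = g x i)" if "i \<in> I" for i
    proof (cases "\<forall>a\<in>carrier A. g a i = \<one>\<^bsub>D\<^esub>")
      case True then show ?thesis using one_hom by (simp add: hh_def)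
    next
      case False
      have o1: "\<forall>g\<in>hom A D. \<exists>h\<in>hom B D. \<forall>x\<in>carrier A. h (f x) = g x"
        using orth by (simp add: orthogonal_def)
      have "\<exists>h. h \<in> hom B D \<and> (\<forall>x\<in>carrier A. h (f x) = g x i)"
        using bspec[OF o1 gi[OF that]] by (simp add: Bex_def)
      note e = someI_ex[OF this]
      have "hh i = (SOME h. h \<in> hom B D \<and> (\<forall>x\<in>carrier A. h (f x) = g x i))"
        unfolding hh_def by (rule if_not_P[OF False])
      then show ?thesis using e by simp
    qed
    have supp: "\<exists>s\<in>S. g s i \<noteq> \<one>\<^bsub>D\<^esub>" if "i \<in> I" "hh i b \<noteq> \<one>\<^bsub>D\<^esub>" for i b
    proof (rule ccontr)
      assume n: "\<not> (\<exists>s\<in>S. g s i \<noteq> \<one>\<^bsub>D\<^esub>)"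
      have "\<forall>s\<in>S. g s i = \<one>\<^bsub>D\<^esub>" using n by blast
      hence "S \<subseteq> kernel A D (\<lambda>a. g a i)" using S(1) unfolding kernel_def by blast
      moreover have "subgroup (kernel A D (\<lambda>a. g a i)) A"
        using group_hom.subgroup_kernel[of A D "\<lambda>a. g a i"] gA gD gi[OF that(1)]
        by (simp add: group_hom_def group_hom_axioms_def)
      ultimately have "generate A S \<subseteq> kernel A D (\<lambda>a. g a i)"
        using group.generate_subgroup_incl[OF gA] by blast
      hence "\<forall>a\<in>carrier A. g a i = \<one>\<^bsub>D\<^esub>" using S(2) by (auto simp: kernel_def)
      thus False using that(2) by (simp add: hh_def)
    qed
    define h where "h b = (\<lambda>i\<in>I. hh i b)" for b
    have bound: "card_of (\<Union>s\<in>S. {i \<in> I. g s i \<noteq> \<one>\<^bsub>D\<^esub>}) <o card_of I"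
    proof (rule regularCard_UNION_bound[OF Cinf assms(6) S(3)])
      fix s assume "s \<in> S"
      hence "g s \<in> carrier ?P" using g S(1) by (auto simp: hom_def)
      thus "card_of {i \<in> I. g s i \<noteq> \<one>\<^bsub>D\<^esub>} <o card_of I" by (simp add: ssp_carrier)
    qed
    have hP: "h b \<in> carrier ?P" if "b \<in> carrier B" for b
    proof -
      have "hh i b \<in> carrier D" if "i \<in> I" for i
        using hh[OF that] \<open>b \<in> carrier B\<close> unfolding hom_def by blast
      hence "h b \<in> I \<rightarrow>\<^sub>E carrier D" by (simp add: h_def)
      moreover have "{i \<in> I. h b i \<noteq> \<one>\<^bsub>D\<^esub>} \<subseteq> (\<Union>s\<in>S. {i \<in> I. g s i \<noteq> \<one>\<^bsub>D\<^esub>})"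
        using supp by (auto simp: h_def)
      hence "card_of {i \<in> I. h b i \<noteq> \<one>\<^bsub>D\<^esub>} <o card_of I"
        using bound card_of_mono1 ordLeq_ordLess_trans by blast
      ultimately show ?thesis by (simp add: ssp_carrier)
    qed
    have hmul: "h (x \<otimes>\<^bsub>B\<^esub> y) = h x \<otimes>\<^bsub>?P\<^esub> h y" if "x \<in> carrier B" "y \<in> carrier B" for x y
      unfolding h_def ssp_mult
      by (rule restrict_ext) (simp add: hom_mult[OF conjunct1[OF hh]] that)
    have "h \<in> hom B ?P" using hP hmul by (intro homI)
    moreover have "h (f x) = g x" if "x \<in> carrier A" for x
    proof
      fix i
      have "g x \<in> carrier ?P" using hom_in_carrier[OF g that] .
      hence gx: "g x \<in> I \<rightarrow>\<^sub>E carrier D" by (simp add: ssp_carrier)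
      show "h (f x) i = g x i"
      proof (cases "i \<in> I")
        case True
        have "h (f x) i = hh i (f x)" using True by (simp add: h_def)
        also have "\<dots> = g x i" using conjunct2[OF hh[OF True]] that by blast
        finally show ?thesis .
      next
        case False
        have "h (f x) i = undefined" using False by (simp add: h_def)
        thus ?thesis using PiE_arb[OF gx False] by simp
      qed
    qed
    ultimately show ?thesis by blast
  qed
  have uniq: "h1 y = h2 y"
    if h1: "h1 \<in> hom B ?P" and h2: "h2 \<in> hom B ?P"
      and eq: "\<forall>x \<in> carrier A. h1 (f x) = h2 (f x)" and y: "y \<in> carrier B" for h1 h2 y
  proof
    fix i
    have "h1 y \<in> carrier ?P" using hom_in_carrier[OF h1 y] .
    hence e1: "h1 y \<in> I \<rightarrow>\<^sub>E carrier D" by (simp add: ssp_carrier)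
    have "h2 y \<in> carrier ?P" using hom_in_carrier[OF h2 y] .
    hence e2: "h2 y \<in> I \<rightarrow>\<^sub>E carrier D" by (simp add: ssp_carrier)
    show "h1 y i = h2 y i"
    proof (cases "i \<in> I")
      case True
      have "\<forall>x \<in> carrier A. h1 (f x) i = h2 (f x) i" using eq by simp
      moreover have o2: "\<forall>h1 \<in> hom B D. \<forall>h2 \<in> hom B D.
        (\<forall>x \<in> carrier A. h1 (f x) = h2 (f x)) \<longrightarrow> (\<forall>y \<in> carrier B. h1 y = h2 y)"
        using orth by (simp add: orthogonal_def)
      have "(\<forall>x \<in> carrier A. h1 (f x) i = h2 (f x) i) \<longrightarrow> (\<forall>y \<in> carrier B. h1 y i = h2 y i)"
        using bspec[OF bspec[OF o2 ssp_proj[OF h1 True]] ssp_proj[OF h2 True]] by simp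
      with calculation show ?thesis using y by blast
    next
      case False thus ?thesis using PiE_arb[OF e1 False] PiE_arb[OF e2 False] by simp
    qed
  qed
  show ?thesis unfolding Lf_local_def orthogonal_def
  proof (intro conjI ballI impI)
    fix g assume "g \<in> hom A ?P" thus "\<exists>h\<in>hom B ?P. \<forall>x\<in>carrier A. h (f x) = g x" by (rule ex)
  next
    fix h1 h2 y assume "h1 \<in> hom B ?P" "h2 \<in> hom B ?P"
      "\<forall>x\<in>carrier A. h1 (f x) = h2 (f x)" "y \<in> carrier B"
    thus "h1 y = h2 y" by (rule uniq)
  qed
qed

end
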